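(* Let $A,B$ be closed densely defined operators in $\mathcal H$ and $G$ a bounded metric operator such that $GD(A)\subseteq D(B)$ and $BG\xi=GA\xi$ for all $\xi\in D(A)$. Let $A^\star$ be defined by $D(A^\star)=\{\eta\in\mathcal H: G\eta\in D(A^* ),\ A^*G\eta\in D(G^{-1})\}$, $A^\star\eta=G^{-1}A^*G\eta$. Then $A^\star$ is densely defined, and $B_0:=(A^\star)^*$ satisfies $GD(A)\subseteq D(B_0)$ and $B_0G\xi=GA\xi$ for all $\xi\in D(A)$; moreover $B_0\subseteq B'$ for every closed operator $B'$ satisfying $GD(A)\subseteq D(B')$ and $B'G\xi=GA\xi$ for all $\xi\in D(A)$ (so $B_0$ is minimal among such closed operators), and $GD(A)$ is a core for $B_0$.
   Context: A metric operator in $\mathcal H$ is a self-adjoint operator $G$ with $\langle G\xi,\xi\rangle>0$ for all nonzero $\xi\in D(G)$; $G^{-1}$ denotes its (possibly unbounded) inverse. $A^*$ denotes the Hilbert space adjoint. *)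

theory Defs
  imports "HOL-Analysis.Analysis"
begin

text \<open>A complex Hilbert space is modelled as a real Hilbert space together with a
complex structure jmul (multiplication by the imaginary unit), which is real-linear,
squares to minus the identity and is isometric.  Complex scalar multiplication and the
complex inner product (linear in the first, conjugate-linear in the second argument)
are derived from it.\<close>

class complex_hilbert = real_inner + complete_space +
  fixes jmul :: "'a \<Rightarrow> 'a"
  assumes jmul_add: "jmul (x + y) = jmul x + jmul y"
    and jmul_scaleR: "jmul (scaleR r x) = scaleR r (jmul x)"
    and jmul_jmul: "jmul (jmul x) = - x"
    and jmul_inner: "inner (jmul x) (jmul y) = inner x y"

definition scaleC :: "complex \<Rightarrow> 'a::complex_hilbert \<Rightarrow> 'a" where
  "scaleC c x = Re c *\<^sub>R x + Im c *\<^sub>R jmul x"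

definition cinner :: "'a::complex_hilbert \<Rightarrow> 'a \<Rightarrow> complex" where
  "cinner x y = Complex (inner x y) (inner x (jmul y))"

type_synonym 'a operator = "'a set \<times> ('a \<Rightarrow> 'a)"

definition dom_op :: "'a operator \<Rightarrow> 'a set" where "dom_op T = fst T"
definition app_op :: "'a operator \<Rightarrow> 'a \<Rightarrow> 'a" where "app_op T = snd T"

definition graph_op :: "'a operator \<Rightarrow> ('a \<times> 'a) set" where
  "graph_op T = {(x, app_op T x) | x. x \<in> dom_op T}"

definition lin_op :: "'a::complex_hilbert operator \<Rightarrow> bool" where
  "lin_op T \<longleftrightarrow> 0 \<in> dom_op T
     \<and> (\<forall>x\<in>dom_op T. \<forall>y\<in>dom_op T. x + y \<in> dom_op T \<and> app_op T (x + y) = app_op T x + app_op T y)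
     \<and> (\<forall>c. \<forall>x\<in>dom_op T. scaleC c x \<in> dom_op T \<and> app_op T (scaleC c x) = scaleC c (app_op T x))"

definition densely_defined :: "'a::complex_hilbert operator \<Rightarrow> bool" where
  "densely_defined T \<longleftrightarrow> closure (dom_op T) = UNIV"

definition closed_op :: "'a::complex_hilbert operator \<Rightarrow> bool" where
  "closed_op T \<longleftrightarrow> lin_op T \<and> closed (graph_op T)"

text \<open>Hilbert space adjoint (for densely defined T the vector z is unique).\<close>
definition adjoint_op :: "'a::complex_hilbert operator \<Rightarrow> 'a operator" where
  "adjoint_op T =
    ({y. \<exists>z. \<forall>x\<in>dom_op T. cinner (app_op T x) y = cinner x z},
     \<lambda>y. THE z. \<forall>x\<in>dom_op T. cinner (app_op T x) y = cinner x z)"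

definition op_le :: "'a operator \<Rightarrow> 'a operator \<Rightarrow> bool" where
  "op_le S T \<longleftrightarrow> dom_op S \<subseteq> dom_op T \<and> (\<forall>x\<in>dom_op S. app_op S x = app_op T x)"

definition is_core :: "'a::complex_hilbert set \<Rightarrow> 'a operator \<Rightarrow> bool" where
  "is_core C T \<longleftrightarrow> C \<subseteq> dom_op T \<and> closure {(x, app_op T x) | x. x \<in> C} = graph_op T"

definition bounded_op :: "('a::complex_hilbert \<Rightarrow> 'a) \<Rightarrow> bool" where
  "bounded_op G \<longleftrightarrow> bounded_linear G \<and> (\<forall>x. G (jmul x) = jmul (G x))"

definition bounded_metric_op :: "('a::complex_hilbert \<Rightarrow> 'a) \<Rightarrow> bool" where
  "bounded_metric_op G \<longleftrightarrow> bounded_op G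
     \<and> (\<forall>x y. cinner (G x) y = cinner x (G y))
     \<and> (\<forall>x. x \<noteq> 0 \<longrightarrow> Im (cinner (G x) x) = 0 \<and> Re (cinner (G x) x) > 0)"

text \<open>The operator A^\<star> = G^{-1} A^* G with its natural domain
  (G^{-1} has domain the range of G).\<close>
definition star_op :: "('a::complex_hilbert \<Rightarrow> 'a) \<Rightarrow> 'a operator \<Rightarrow> 'a operator" where
  "star_op G A =
    ({\<eta>. G \<eta> \<in> dom_op (adjoint_op A) \<and> app_op (adjoint_op A) (G \<eta>) \<in> range G},
     \<lambda>\<eta>. inv G (app_op (adjoint_op A) (G \<eta>)))"

end

theory Submission
  imports Defs
begin

lemma parallelogram_sq:
  fixes a b :: "'b::real_inner"
  shows "norm (a - b)^2 = 2 * norm a ^2 + 2 * norm b ^2 - norm (a + b)^2"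
  by (simp add: power2_norm_eq_inner inner_diff inner_add inner_commute algebra_simps)

lemma norm_diff_scale_sq:
  fixes v w :: "'b::real_inner"
  shows "norm (v - u *\<^sub>R w)^2 = norm v^2 - 2 * u * inner v w + u^2 * norm w^2"
proof -
  have "norm (v - u *\<^sub>R w)^2 = inner (v - u *\<^sub>R w) (v - u *\<^sub>R w)"
    by (simp add: power2_norm_eq_inner)
  also have "\<dots> = inner v v - 2 * u * inner v w + u^2 * inner w w"
    by (simp add: inner_diff_left inner_diff_right inner_commute power2_eq_square algebra_simps)
  finally show ?thesis by (simp add: power2_norm_eq_inner)
qed

lemma nearest_exists:
  fixes C :: "'b::{real_inner,complete_space} set"
  assumes cl: "closed C" and cv: "convex C" and ne: "C \<noteq> {}"
  shows "\<exists>p\<in>C. \<forall>y\<in>C. norm (x - p) \<le> norm (x - y)"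
proof -
  define d where "d = infdist x C"
  have d0: "0 \<le> d" by (simp add: d_def infdist_nonneg)
  have dle: "\<And>y. y \<in> C \<Longrightarrow> d \<le> norm (x - y)"
    using infdist_le by (metis d_def dist_norm)
  have "\<forall>n. \<exists>y\<in>C. dist x y < d + inverse (real (Suc n))"
  proof
    fix n
    have "infdist x C < d + inverse (real (Suc n))" by (simp add: d_def)
    then show "\<exists>y\<in>C. dist x y < d + inverse (real (Suc n))"
      unfolding infdist_notempty[OF ne]
      by (subst (asm) cINF_less_iff) (auto simp: ne intro: bdd_belowI[where m=0])
  qed
  then obtain y where yC: "\<And>n. y n \<in> C" and yd: "\<And>n. norm (x - y n) < d + inverse (real (Suc n))"
    by (metis dist_norm)
  define e where "e n = inverse (real (Suc n))" for n
  have e0: "0 < e n" "e n \<le> 1" for n by (auto simp: e_def field_simps)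
  define K where "K = 2 * (2 * d + 1)"
  have key: "norm (y n - y m)^2 \<le> K * (e n + e m)" for n m
  proof -
    have mid: "(1/2) *\<^sub>R y n + (1/2) *\<^sub>R y m \<in> C"
      using cv yC unfolding convex_def by auto
    have "norm (x - y n + (x - y m)) = 2 * norm (x - ((1/2) *\<^sub>R y n + (1/2) *\<^sub>R y m))"
    proof -
      have "x - y n + (x - y m) = 2 *\<^sub>R (x - ((1/2) *\<^sub>R y n + (1/2) *\<^sub>R y m))"
        by (simp add: algebra_simps scaleR_add_right scaleR_2)
      then show ?thesis by simp
    qed
    then have s: "2 * d \<le> norm (x - y n + (x - y m))" using dle[OF mid] by simp
    have s2: "(2*d)^2 \<le> norm (x - y n + (x - y m))^2"
      using s d0 by (intro power_mono) auto
    have a: "norm (x - y n)^2 \<le> (d + e n)^2"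
      using yd[of n] by (intro power_mono) (auto simp: e_def)
    have b: "norm (x - y m)^2 \<le> (d + e m)^2"
      using yd[of m] by (intro power_mono) (auto simp: e_def)
    have "norm (y n - y m)^2 = norm ((x - y m) - (x - y n))^2"
      by (simp add: norm_minus_commute)
    also have "\<dots> = 2 * norm (x - y m)^2 + 2 * norm (x - y n)^2 - norm (x - y n + (x - y m))^2"
      by (subst parallelogram_sq) (simp add: add.commute)
    also have "\<dots> \<le> 2 * (d + e m)^2 + 2 * (d + e n)^2 - (2*d)^2"
      using a b s2 by linarith
    also have "\<dots> = 2 * (2*d*e m + e m * e m) + 2 * (2*d*e n + e n * e n)"
      by (simp add: power2_eq_square algebra_simps)
    also have "\<dots> \<le> 2 * (2*d*e m + e m) + 2 * (2*d*e n + e n)"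
      using e0[of m] e0[of n] d0 by (intro add_mono mult_left_mono) (auto simp: mult_le_cancel_left1)
    also have "\<dots> = K * (e n + e m)" by (simp add: K_def algebra_simps)
    finally show ?thesis .
  qed
  have K0: "0 < K" using d0 by (simp add: K_def)
  have "Cauchy y"
    unfolding Cauchy_def
  proof (intro allI impI)
    fix r :: real assume r: "0 < r"
    obtain N :: nat where N: "inverse (real (Suc N)) < r^2 / (2*K)"
    proof -
      have "0 < r^2 / (2*K)" using r K0 by simp
      from reals_Archimedean[OF this] show ?thesis using that by blast
    qed
    show "\<exists>M. \<forall>m\<ge>M. \<forall>n\<ge>M. dist (y m) (y n) < r"
    proof (intro exI allI impI)
      fix m n assume mn: "N \<le> m" "N \<le> n"
      have em: "e m \<le> inverse (real (Suc N))" "e n \<le> inverse (real (Suc N))"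
        using mn by (auto simp: e_def intro!: le_imp_inverse_le)
      have "dist (y m) (y n)^2 \<le> K * (e m + e n)" using key[of m n] by (simp add: dist_norm)
      also have "\<dots> \<le> K * (2 * inverse (real (Suc N)))"
        using em K0 by (intro mult_left_mono) auto
      also have "\<dots> < K * (2 * (r^2 / (2*K)))"
        using N K0 by (intro mult_strict_left_mono) auto
      also have "\<dots> = r^2" using K0 by simp
      finally have "dist (y m) (y n)^2 < r^2" .
      then show "dist (y m) (y n) < r" using r by (simp add: power_less_imp_less_base)
    qed
  qed
  then obtain p where yp: "y \<longlonglongrightarrow> p" using Cauchy_convergent_iff convergent_def by blast
  have pC: "p \<in> C" using closed_sequentially[OF cl yC yp] .
  have l1: "(\<lambda>n. norm (x - y n)) \<longlonglongrightarrow> norm (x - p)"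
    by (intro tendsto_intros yp)
  have l2: "(\<lambda>n. d + inverse (real (Suc n))) \<longlonglongrightarrow> d + 0"
    by (intro tendsto_intros LIMSEQ_inverse_real_of_nat)
  have "norm (x - p) \<le> d + 0"
    by (rule LIMSEQ_le[OF l1 l2]) (use yd in \<open>auto intro: less_imp_le\<close>)
  then show ?thesis using pC dle by force
qed

lemma perp_closure:
  fixes S :: "'b::{real_inner,complete_space} set"
  assumes sub: "subspace S" and perp: "\<And>y. (\<forall>s\<in>S. inner s y = 0) \<Longrightarrow> inner x y = 0"
  shows "x \<in> closure S"
proof -
  have S0: "0 \<in> S" using sub by (simp add: subspace_def)
  have Ssc: "\<And>t s. s \<in> S \<Longrightarrow> t *\<^sub>R s \<in> S" using sub by (simp add: subspace_def)
  obtain p where pC: "p \<in> closure S" and pmin: "\<forall>y\<in>closure S. norm (x - p) \<le> norm (x - y)"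
    using nearest_exists[of "closure S" x] sub S0
    by (auto simp: subspace_imp_convex convex_closure)
  have var: "inner (x - p) (c - p) \<le> 0" if c: "c \<in> closure S" for c
  proof (rule ccontr)
    define k where "k = inner (x - p) (c - p)"
    define m where "m = norm (c - p)^2"
    assume "\<not> inner (x - p) (c - p) \<le> 0"
    then have k: "0 < k" by (simp add: k_def)
    have m0: "0 \<le> m" by (simp add: m_def)
    define u where "u = k / (m + k)"
    have u: "0 < u" "u \<le> 1" using k m0 by (auto simp: u_def)
    have "(1 - u) *\<^sub>R p + u *\<^sub>R c \<in> closure S"
      using convex_closure[OF subspace_imp_convex[OF sub]] pC c u unfolding convex_def by auto
    then have "norm (x - p) \<le> norm (x - ((1 - u) *\<^sub>R p + u *\<^sub>R c))" using pmin by blast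
    then have "norm (x - p)^2 \<le> norm ((x - p) - u *\<^sub>R (c - p))^2"
      by (simp add: algebra_simps)
    also have "\<dots> = norm (x - p)^2 - 2 * u * k + u^2 * m"
      by (simp add: k_def m_def norm_diff_scale_sq)
    finally have "2 * u * k \<le> u^2 * m" by simp
    then have "2 * k \<le> u * m" using u by (simp add: power2_eq_square)
    also have "u * m \<le> k" using k m0 by (simp add: u_def field_simps)
    finally show False using k by simp
  qed
  have orth: "inner s (x - p) = 0" if s: "s \<in> S" for s
  proof (rule ccontr)
    define a where "a = inner (x - p) s"
    define b where "b = inner (x - p) p"
    assume "inner s (x - p) \<noteq> 0"
    then have a: "a \<noteq> 0" by (simp add: a_def inner_commute)
    have "\<And>t. t * a \<le> b"
    proof -
      fix t
      have "inner (x - p) (t *\<^sub>R s - p) \<le> 0" using var Ssc[OF s] closure_subset by blast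
      then show "t * a \<le> b" by (simp add: a_def b_def inner_diff_right)
    qed
    from this[of "(b + 1) / a"] a show False by simp
  qed
  then have h1: "inner x (x - p) = 0" using perp by blast
  have "S \<subseteq> {q. inner q (x - p) = 0}" using orth by blast
  moreover have "closed {q. inner q (x - p) = 0}"
    by (intro closed_Collect_eq continuous_intros)
  ultimately have "closure S \<subseteq> {q. inner q (x - p) = 0}" by (rule closure_minimal)
  then have h2: "inner p (x - p) = 0" using pC by blast
  have "inner (x - p) (x - p) = 0" using h1 h2 by (simp add: inner_diff_left)
  then have "x = p" by simp
  then show ?thesis using pC by simp
qed
lemma jmul_zero: "jmul (0::'a::complex_hilbert) = 0"
  using jmul_scaleR[of 0 "0::'a"] by simp
lemma jmul_minus: "jmul (- (x::'a::complex_hilbert)) = - jmul x"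
  using jmul_scaleR[of "-1" x] by simp
lemma scaleC_ii: "scaleC \<i> (x::'a::complex_hilbert) = jmul x"
  by (simp add: scaleC_def)
lemma scaleC_real: "scaleC (complex_of_real r) (x::'a::complex_hilbert) = r *\<^sub>R x"
  by (simp add: scaleC_def)
lemma inner_jmul_right: "inner a (jmul (y::'a::complex_hilbert)) = - inner (jmul a) y"
proof -
  have "inner (jmul a) (jmul (jmul y)) = inner a (jmul y)" by (rule jmul_inner)
  then show ?thesis by (simp add: jmul_jmul)
qed

lemma graph_op_iff: "(u, v) \<in> graph_op T \<longleftrightarrow> u \<in> dom_op T \<and> app_op T u = v"
  by (auto simp: graph_op_def)

lemma lin_op_jmul: "lin_op T \<Longrightarrow> x \<in> dom_op T \<Longrightarrow> jmul x \<in> dom_op T \<and> app_op T (jmul x) = jmul (app_op T x)"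
  unfolding lin_op_def by (metis scaleC_ii)
lemma lin_op_scaleR: "lin_op T \<Longrightarrow> x \<in> dom_op T \<Longrightarrow> r *\<^sub>R x \<in> dom_op T \<and> app_op T (r *\<^sub>R x) = r *\<^sub>R (app_op T x)"
  unfolding lin_op_def by (metis scaleC_real)
lemma lin_op_add: "lin_op T \<Longrightarrow> x \<in> dom_op T \<Longrightarrow> y \<in> dom_op T \<Longrightarrow> x + y \<in> dom_op T \<and> app_op T (x + y) = app_op T x + app_op T y"
  unfolding lin_op_def by blast
lemma lin_op_zero: "lin_op T \<Longrightarrow> 0 \<in> dom_op T \<and> app_op T 0 = 0"
  unfolding lin_op_def by (metis add_cancel_right_right add_0)

lemma real_cinner:
  assumes "lin_op T"
  shows "(\<forall>x\<in>dom_op T. cinner (app_op T x) y = cinner x z) \<longleftrightarrow> (\<forall>x\<in>dom_op T. inner (app_op T x) y = inner x z)"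
proof
  assume "\<forall>x\<in>dom_op T. cinner (app_op T x) y = cinner x z"
  then show "\<forall>x\<in>dom_op T. inner (app_op T x) y = inner x z" by (auto simp: cinner_def)
next
  assume h: "\<forall>x\<in>dom_op T. inner (app_op T x) y = inner x z"
  show "\<forall>x\<in>dom_op T. cinner (app_op T x) y = cinner x z"
  proof
    fix x assume x: "x \<in> dom_op T"
    have j: "jmul x \<in> dom_op T" "app_op T (jmul x) = jmul (app_op T x)" using lin_op_jmul[OF assms x] by auto
    have "inner (app_op T x) (jmul y) = - inner (app_op T (jmul x)) y" by (simp add: j inner_jmul_right)
    also have "\<dots> = - inner (jmul x) z" using h j(1) by simp
    also have "\<dots> = inner x (jmul z)" by (simp add: inner_jmul_right)
    finally show "cinner (app_op T x) y = cinner x z" using h x by (simp add: cinner_def)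
  qed
qed

lemma dense_unique:
  fixes z1 :: "'a::complex_hilbert"
  assumes "densely_defined T" "\<forall>x\<in>dom_op T. inner x z1 = inner x z2"
  shows "z1 = z2"
proof -
  have "dom_op T \<subseteq> {x. inner x (z1 - z2) = 0}" using assms(2) by (auto simp: inner_diff_right)
  moreover have "closed {x. inner x (z1 - z2) = 0}" by (intro closed_Collect_eq continuous_intros)
  ultimately have "closure (dom_op T) \<subseteq> {x. inner x (z1 - z2) = 0}" by (rule closure_minimal)
  then have "z1 - z2 \<in> {x. inner x (z1 - z2) = 0}" using assms(1) unfolding densely_defined_def by blast
  then have "inner (z1 - z2) (z1 - z2) = 0" by (simp only: mem_Collect_eq)
  then show ?thesis by (simp del: inner_diff_left inner_diff_right)
qed

lemma adj_char:
  fixes T :: "'a::complex_hilbert operator"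
  assumes dd: "densely_defined T" and lin: "lin_op T"
  shows "(y \<in> dom_op (adjoint_op T) \<and> app_op (adjoint_op T) y = z)
     \<longleftrightarrow> (\<forall>x\<in>dom_op T. inner (app_op T x) y = inner x z)"
proof -
  define P where "P y z = (\<forall>x\<in>dom_op T. cinner (app_op T x) y = cinner x z)" for y z
  have uniq: "P y z1 \<Longrightarrow> P y z2 \<Longrightarrow> z1 = z2" for z1 z2
    using dense_unique[OF dd, of z1 z2] by (auto simp: P_def real_cinner[OF lin])
  have dom: "dom_op (adjoint_op T) = {y. \<exists>z. P y z}" unfolding adjoint_op_def dom_op_def P_def by simp
  have app: "app_op (adjoint_op T) y = (THE z. P y z)" unfolding adjoint_op_def app_op_def P_def by simp
  have "(y \<in> dom_op (adjoint_op T) \<and> app_op (adjoint_op T) y = z) \<longleftrightarrow> P y z"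
  proof
    assume h: "y \<in> dom_op (adjoint_op T) \<and> app_op (adjoint_op T) y = z"
    then obtain z0 where "P y z0" using dom by auto
    then have "(THE z. P y z) = z0" using uniq by (intro the_equality) auto
    then show "P y z" using h app \<open>P y z0\<close> by simp
  next
    assume "P y z"
    then have "(THE z. P y z) = z" using uniq by (intro the_equality) auto
    then show "y \<in> dom_op (adjoint_op T) \<and> app_op (adjoint_op T) y = z" using dom app \<open>P y z\<close> by auto
  qed
  then show ?thesis by (simp add: P_def real_cinner[OF lin])
qed

theorem lemma5p8:
  fixes A B :: "'a::complex_hilbert operator" and G :: "'a \<Rightarrow> 'a"
  assumes A: "closed_op A" "densely_defined A"
    and B: "closed_op B" "densely_defined B"
    and G: "bounded_metric_op G"
    and GAB: "G ` dom_op A \<subseteq> dom_op B"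
    and inter: "\<forall>\<xi>\<in>dom_op A. app_op B (G \<xi>) = G (app_op A \<xi>)"
  shows "densely_defined (star_op G A)
    \<and> G ` dom_op A \<subseteq> dom_op (adjoint_op (star_op G A))
    \<and> (\<forall>\<xi>\<in>dom_op A. app_op (adjoint_op (star_op G A)) (G \<xi>) = G (app_op A \<xi>))
    \<and> (\<forall>B'. closed_op B' \<and> G ` dom_op A \<subseteq> dom_op B'
            \<and> (\<forall>\<xi>\<in>dom_op A. app_op B' (G \<xi>) = G (app_op A \<xi>))
           \<longrightarrow> op_le (adjoint_op (star_op G A)) B')
    \<and> is_core (G ` dom_op A) (adjoint_op (star_op G A))"
proof -
  have linA: "lin_op A" and linB: "lin_op B" using A B by (auto simp: closed_op_def)
  have bl: "bounded_linear G" and Gj: "\<And>x. G (jmul x) = jmul (G x)"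
    using G by (auto simp: bounded_metric_op_def bounded_op_def)
  have Gsym: "\<And>x y. inner (G x) y = inner x (G y)"
  proof -
    fix x y
    have "cinner (G x) y = cinner x (G y)" using G by (auto simp: bounded_metric_op_def)
    then show "inner (G x) y = inner x (G y)" by (simp add: cinner_def)
  qed
  have Ginj: "inj G"
  proof (rule injI)
    fix x y assume "G x = G y"
    then have "G (x - y) = 0" using linear_diff[OF bounded_linear.linear[OF bl]] by simp
    then have "Re (cinner (G (x - y)) (x - y)) = 0" by (simp add: cinner_def)
    moreover have "x - y \<noteq> 0 \<longrightarrow> 0 < Re (cinner (G (x - y)) (x - y))"
      using G unfolding bounded_metric_op_def by blast
    ultimately show "x = y" by auto
  qed
  have G0: "G 0 = 0" using linear_0[OF bounded_linear.linear[OF bl]] by simp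
  have Gadd: "\<And>x y. G (x + y) = G x + G y" using linear_add[OF bounded_linear.linear[OF bl]] by simp
  have GsR: "\<And>r x. G (r *\<^sub>R x) = r *\<^sub>R G x" using linear_scale[OF bounded_linear.linear[OF bl]] by simp
  define R where "R y z \<longleftrightarrow> (\<forall>\<xi>\<in>dom_op A. inner (G (app_op A \<xi>)) y = inner (G \<xi>) z)" for y z
  define S0 where "S0 = star_op G A"
  have domS0: "dom_op S0 = {\<eta>. G \<eta> \<in> dom_op (adjoint_op A) \<and> app_op (adjoint_op A) (G \<eta>) \<in> range G}"
    and appS0: "\<And>\<eta>. app_op S0 \<eta> = inv G (app_op (adjoint_op A) (G \<eta>))"
    unfolding S0_def star_op_def dom_op_def app_op_def by simp_all
  have gS0: "y \<in> dom_op S0 \<and> app_op S0 y = z \<longleftrightarrow> R y z" for y z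
  proof
    assume h: "y \<in> dom_op S0 \<and> app_op S0 y = z"
    then have d: "G y \<in> dom_op (adjoint_op A)" and r: "app_op (adjoint_op A) (G y) \<in> range G"
      using domS0 by auto
    have "G z = app_op (adjoint_op A) (G y)" using h appS0 r f_inv_into_f by metis
    then have "\<forall>\<xi>\<in>dom_op A. inner (app_op A \<xi>) (G y) = inner \<xi> (G z)"
      using adj_char[OF A(2) linA] d by metis
    then show "R y z" unfolding R_def by (simp add: Gsym)
  next
    assume "R y z"
    then have "\<forall>\<xi>\<in>dom_op A. inner (app_op A \<xi>) (G y) = inner \<xi> (G z)"
      unfolding R_def by (simp add: Gsym)
    then have "G y \<in> dom_op (adjoint_op A) \<and> app_op (adjoint_op A) (G y) = G z"
      using adj_char[OF A(2) linA] by blast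
    then show "y \<in> dom_op S0 \<and> app_op S0 y = z"
      using domS0 appS0 Ginj by (auto simp: inv_f_f)
  qed
  have Radd: "R y z \<Longrightarrow> R y' z' \<Longrightarrow> R (y + y') (z + z')" for y z y' z'
    by (simp add: R_def inner_add_right)
  have RsR: "R y z \<Longrightarrow> R (r *\<^sub>R y) (r *\<^sub>R z)" for y z r
    by (simp add: R_def)
  have Rj: "R y z \<Longrightarrow> R (jmul y) (jmul z)" for y z
    unfolding R_def
  proof
    fix \<xi> assume Ryz: "\<forall>\<xi>\<in>dom_op A. inner (G (app_op A \<xi>)) y = inner (G \<xi>) z" and x: "\<xi> \<in> dom_op A"
    have j: "jmul \<xi> \<in> dom_op A" "app_op A (jmul \<xi>) = jmul (app_op A \<xi>)" using lin_op_jmul[OF linA x] by auto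
    have "inner (G (app_op A \<xi>)) (jmul y) = - inner (G (app_op A (jmul \<xi>))) y"
      by (simp add: j Gj inner_jmul_right)
    also have "\<dots> = - inner (G (jmul \<xi>)) z" using Ryz j(1) by simp
    also have "\<dots> = inner (G \<xi>) (jmul z)" by (simp add: Gj inner_jmul_right)
    finally show "inner (G (app_op A \<xi>)) (jmul y) = inner (G \<xi>) (jmul z)" .
  qed
  have R0: "R 0 0" by (simp add: R_def)
  have linS0: "lin_op S0"
    unfolding lin_op_def
  proof (intro conjI ballI allI)
    show "0 \<in> dom_op S0" using gS0 R0 by blast
  next
    fix x y assume x: "x \<in> dom_op S0" and y: "y \<in> dom_op S0"
    have "R (x + y) (app_op S0 x + app_op S0 y)" using Radd gS0 x y by blast
    then show "x + y \<in> dom_op S0" "app_op S0 (x + y) = app_op S0 x + app_op S0 y" using gS0 by blast+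
  next
    fix c :: complex and x assume x: "x \<in> dom_op S0"
    have Rx: "R x (app_op S0 x)" using gS0 x by blast
    have "R (scaleC c x) (scaleC c (app_op S0 x))"
      unfolding scaleC_def by (intro Radd RsR Rj Rx)
    then show "scaleC c x \<in> dom_op S0" "app_op S0 (scaleC c x) = scaleC c (app_op S0 x)" using gS0 by blast+
  qed
  define \<Gamma> where "\<Gamma> = {(G \<xi>, G (app_op A \<xi>)) | \<xi>. \<xi> \<in> dom_op A}"
  have subG: "subspace \<Gamma>"
    unfolding subspace_def \<Gamma>_def
  proof (intro conjI ballI allI)
    show "0 \<in> {(G \<xi>, G (app_op A \<xi>)) | \<xi>. \<xi> \<in> dom_op A}"
      using lin_op_zero[OF linA] G0 by (auto intro!: exI[of _ 0] simp: zero_prod_def)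
  next
    fix x y assume "x \<in> {(G \<xi>, G (app_op A \<xi>)) | \<xi>. \<xi> \<in> dom_op A}" "y \<in> {(G \<xi>, G (app_op A \<xi>)) | \<xi>. \<xi> \<in> dom_op A}"
    then obtain a b where "x = (G a, G (app_op A a))" "a \<in> dom_op A" "y = (G b, G (app_op A b))" "b \<in> dom_op A" by blast
    then show "x + y \<in> {(G \<xi>, G (app_op A \<xi>)) | \<xi>. \<xi> \<in> dom_op A}"
      using lin_op_add[OF linA] Gadd by (auto intro!: exI[of _ "a + b"])
  next
    fix c :: real and x assume "x \<in> {(G \<xi>, G (app_op A \<xi>)) | \<xi>. \<xi> \<in> dom_op A}"
    then obtain a where "x = (G a, G (app_op A a))" "a \<in> dom_op A" by blast
    then show "c *\<^sub>R x \<in> {(G \<xi>, G (app_op A \<xi>)) | \<xi>. \<xi> \<in> dom_op A}"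
      using lin_op_scaleR[OF linA] GsR by (auto intro!: exI[of _ "c *\<^sub>R a"])
  qed
  have perpG: "R (- snd q) (fst q)" if "\<forall>s\<in>\<Gamma>. inner s q = 0" for q
    unfolding R_def
  proof
    fix \<xi> assume "\<xi> \<in> dom_op A"
    then have "inner (G \<xi>, G (app_op A \<xi>)) q = 0" using that unfolding \<Gamma>_def by blast
    then show "inner (G (app_op A \<xi>)) (- snd q) = inner (G \<xi>) (fst q)"
      by (cases q) (simp add: algebra_simps)
  qed
  have GsubB: "\<Gamma> \<subseteq> graph_op B" using GAB inter unfolding \<Gamma>_def by (auto simp: graph_op_iff)
  have clB: "closure \<Gamma> \<subseteq> graph_op B"
    using closure_minimal[OF GsubB] B(1) by (auto simp: closed_op_def)
  have subD: "subspace (dom_op S0)" using linS0 lin_op_zero lin_op_add lin_op_scaleR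
    unfolding subspace_def by blast
  have ddS0: "densely_defined S0"
    unfolding densely_defined_def
  proof -
    have "x \<in> closure (dom_op S0)" for x
    proof (rule perp_closure[OF subD])
      fix w assume w: "\<forall>s\<in>dom_op S0. inner s w = 0"
      have "(0, w) \<in> closure \<Gamma>"
      proof (rule perp_closure[OF subG])
        fix q assume "\<forall>s\<in>\<Gamma>. inner s q = 0"
        then have "R (- snd q) (fst q)" by (rule perpG)
        then have "- snd q \<in> dom_op S0" using gS0 by blast
        then have "inner (- snd q) w = 0" using w by blast
        then show "inner (0, w) q = 0" by (simp add: inner_Pair_0 inner_commute)
      qed
      then have "(0, w) \<in> graph_op B" using clB by blast
      then have "w = 0" using lin_op_zero[OF linB] by (simp add: graph_op_iff)
      then show "inner x w = 0" by simp
    qed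
    then show "closure (dom_op S0) = UNIV" by blast
  qed
  define B0 where "B0 = adjoint_op S0"
  have gB0: "(u, v) \<in> graph_op B0 \<longleftrightarrow> (\<forall>y z. R y z \<longrightarrow> inner z u = inner y v)" for u v
  proof -
    have "(u, v) \<in> graph_op B0 \<longleftrightarrow> (\<forall>x\<in>dom_op S0. inner (app_op S0 x) u = inner x v)"
      unfolding graph_op_iff B0_def by (rule adj_char[OF ddS0 linS0])
    also have "\<dots> \<longleftrightarrow> (\<forall>y z. R y z \<longrightarrow> inner z u = inner y v)"
      using gS0 by metis
    finally show ?thesis .
  qed
  have GsubB0: "\<Gamma> \<subseteq> graph_op B0"
  proof
    fix g assume "g \<in> \<Gamma>"
    then obtain \<xi> where g: "g = (G \<xi>, G (app_op A \<xi>))" "\<xi> \<in> dom_op A" unfolding \<Gamma>_def by blast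
    show "g \<in> graph_op B0" unfolding g gB0 using g(2) by (auto simp: R_def inner_commute)
  qed
  have closedB0: "closed (graph_op B0)"
  proof -
    have eq: "graph_op B0 = {p. \<forall>y z. R y z \<longrightarrow> inner z (fst p) = inner y (snd p)}"
      using gB0 by auto
    have "closed {p. R y z \<longrightarrow> inner z (fst p) = inner y (snd p)}" for y z
    proof (cases "R y z")
      case True
      have "closed {p. inner z (fst p) = inner y (snd p)}" by (intro closed_Collect_eq continuous_intros)
      then show ?thesis using True by simp
    next
      case False then show ?thesis by simp
    qed
    then show ?thesis unfolding eq by (intro closed_Collect_all)
  qed
  have B0cl: "graph_op B0 = closure \<Gamma>"
  proof
    show "closure \<Gamma> \<subseteq> graph_op B0" by (rule closure_minimal[OF GsubB0 closedB0])
  next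
    show "graph_op B0 \<subseteq> closure \<Gamma>"
    proof
      fix p assume p: "p \<in> graph_op B0"
      obtain u v where uv: "p = (u, v)" by (cases p)
      show "p \<in> closure \<Gamma>"
      proof (rule perp_closure[OF subG])
        fix q assume "\<forall>s\<in>\<Gamma>. inner s q = 0"
        then have "R (- snd q) (fst q)" by (rule perpG)
        then have "inner (fst q) u = inner (- snd q) v" using p uv gB0 by blast
        then show "inner p q = 0" unfolding uv by (cases q) (simp add: inner_commute)
      qed
    qed
  qed
  have onG: "\<xi> \<in> dom_op A \<Longrightarrow> G \<xi> \<in> dom_op B0 \<and> app_op B0 (G \<xi>) = G (app_op A \<xi>)" for \<xi>
    using GsubB0 unfolding \<Gamma>_def by (auto simp: graph_op_iff)
  have min: "op_le B0 B'" if h: "closed_op B' \<and> G ` dom_op A \<subseteq> dom_op B'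
            \<and> (\<forall>\<xi>\<in>dom_op A. app_op B' (G \<xi>) = G (app_op A \<xi>))" for B'
  proof -
    have "\<Gamma> \<subseteq> graph_op B'" using h unfolding \<Gamma>_def by (auto simp: graph_op_iff)
    then have "closure \<Gamma> \<subseteq> graph_op B'" using closure_minimal h by (auto simp: closed_op_def)
    then have "graph_op B0 \<subseteq> graph_op B'" using B0cl by simp
    then have "\<And>x. x \<in> dom_op B0 \<Longrightarrow> (x, app_op B0 x) \<in> graph_op B'"
      using graph_op_iff[of _ _ B0] by blast
    then have "\<And>x. x \<in> dom_op B0 \<Longrightarrow> x \<in> dom_op B' \<and> app_op B' x = app_op B0 x"
      by (simp only: graph_op_iff)
    then show ?thesis unfolding op_le_def by (simp add: subset_iff)
  qed
  have core: "is_core (G ` dom_op A) B0"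
  proof -
    have "{(x, app_op B0 x) | x. x \<in> G ` dom_op A} = \<Gamma>" using onG unfolding \<Gamma>_def by force
    then show ?thesis unfolding is_core_def using onG B0cl by auto
  qed
  show ?thesis using ddS0 onG min core unfolding S0_def[symmetric] B0_def[symmetric] by blast
qed

end
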